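(* Let $(\mathcal M,\mathcal E)$ be a MAC grid of $\Omega$, $i\in\{1,\dots,d\}$, and $\boldsymbol u,\boldsymbol v,\boldsymbol w\in\mathbf H_{\mathcal E,0}$. Then there exist, for each $j\in\{1,\dots,d\}$, reconstruction operators $(\mathcal R^{(i,j)}_{\widetilde{\mathcal E}})^v$ and $(\mathcal R^{(j,i)}_{\widetilde{\mathcal E}})^u$ (whose weights may depend on $\boldsymbol u$) such that $$b_{\mathcal E^{(i)}}(\boldsymbol u,v_i,w_i)=-\sum_{j=1}^d\int_\Omega(\mathcal R^{(i,j)}_{\widetilde{\mathcal E}})^v v_i\;(\mathcal R^{(j,i)}_{\widetilde{\mathcal E}})^u u_j\;\eth_jw_i\,d\boldsymbol x.$$
   Context: Let $d\in\{2,3\}$ and let $\Omega\subset\mathbb{R}^d$ be a bounded connected open set which is a finite union of rectangles ($d=2$) or rectangular parallelepipeds ($d=3$) whose faces are orthogonal to vectors of the canonical basis $(\boldsymbol e^{(1)},\dots,\boldsymbol e^{(d)})$. A MAC grid $(\mathcal M,\mathcal E)$ of $\Omega$ is given by a conforming structured partition $\mathcal M$ of $\Omega$ into possibly non-uniform rectangles ($d=2$) or rectangular parallelepipeds ($d=3$) with faces orthogonal to the basis vectors (the primal cells $K$, with mass centers $\boldsymbol x_K$), and the set $\mathcal E$ of all faces of these cells, split into interior faces $\mathcal E_{\rm int}$ and boundary faces $\mathcal E_{\rm ext}$ (those lying on $\partial\Omega$). For $i\in\{1,\dots,d\}$, $\mathcal E^{(i)}$ (resp. $\mathcal E^{(i)}_{\rm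 int}$, $\mathcal E^{(i)}_{\rm ext}$) is the set of faces (resp. interior, boundary faces) orthogonal to $\boldsymbol e^{(i)}$. For a face $\sigma$, $\boldsymbol x_\sigma$ is its mass center and $|\sigma|$ its $(d-1)$-dimensional measure ($|A|$ also denotes the $d$-dimensional measure of $A\subset\mathbb R^d$); $\mathcal E(K)$ is the set of faces of $K$ and $\boldsymbol n_{K,\sigma}$ the unit normal to $\sigma\in\mathcal E(K)$ outward $K$; we write $\sigma=K|L$ if $\sigma=\partial K\cap\partial L\in\mathcal E_{\rm int}$. For $\sigma\in\mathcal E(K)$, $D_{K,\sigma}$ is the half of $K$ adjacent to $\sigma$ (the part of $K$ between $\sigma$ and the hyperplane parallel to $\sigma$ through $\boldsymbol x_K$). The dual cell of $\sigma$ is $D_\sigma=D_{K,\sigma}\cup D_{L,\sigma}$ if $\sigma=K|L$ and $D_\sigma=D_{K,\sigma}$ if $\sigma\in\mathcal E_{\rm ext}\cap\mathcal E(K)$. For each $i$, $(D_\sigma)_{\sigma\in\mathcal E^{(i)}}$ is a partition of $\Omega$ (the $i$-th dual mesh); $\widetilde{\mathcal E}^{(i)}$ is the set of faces of this dual mesh, split into interior dual faces $\widetilde{\mathcal E}^{(i)}_{\rm int}$ (we write $\epsilon=\sigma|\sigma'$ for the face separating $D_\sigma$ and $D_{\sigma'}$) and boundary dual faces $\widetilde{\mathcal E}^{(i)}_{\rm ext}$ (lying on $\partial\Omega$); $\widetilde{\mathcal E}(D_\sigma)$ is the set of faces of $D_\sigma$. For $\sigma\in\mathcal E^{(i)}$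 and $\epsilon\in\widetilde{\mathcal E}(D_\sigma)$, $d_\epsilon=|\boldsymbol x_\sigma-\boldsymbol x_{\sigma'}|$ if $\epsilon=\sigma|\sigma'\in\widetilde{\mathcal E}^{(i)}_{\rm int}$, and $d_\epsilon$ is the Euclidean distance from $\boldsymbol x_\sigma$ to $\epsilon$ if $\epsilon\in\widetilde{\mathcal E}^{(i)}_{\rm ext}$. $H_{\mathcal E^{(i)},0}$ is the space of functions $u=\sum_{\sigma\in\mathcal E^{(i)}}u_\sigma\mathbf 1_{D_\sigma}$ with $u_\sigma=0$ for $\sigma\in\mathcal E^{(i)}_{\rm ext}$, and $\mathbf H_{\mathcal E,0}=\prod_{i=1}^d H_{\mathcal E^{(i)},0}$. Discrete velocity gradient: for $i,j\in\{1,\dots,d\}$, to each $\epsilon\in\widetilde{\mathcal E}^{(i)}$ orthogonal to $\boldsymbol e^{(j)}$ associate $D_\epsilon=\epsilon\times[\boldsymbol x_\sigma,\boldsymbol x_{\sigma'}]$ if $\epsilon=\sigma|\sigma'$ and $D_\epsilon=\epsilon\times[\boldsymbol x_\sigma,\boldsymbol x_{\sigma,\epsilon}]$ if $\epsilon\in\widetilde{\mathcal E}^{(i)}_{\rm ext}\cap\widetilde{\mathcal E}(D_\sigma)$, where $\boldsymbol x_{\sigma,\epsilon}$ is the orthogonal projection of $\boldsymbol x_\sigma$ on $\epsilon$; these $D_\epsilon$ form a partition of $\Omega$ (the $(i,j)$-partition; the $(i,j)$- and $(j,i)$-partitions coincide). An interior dual face orthogonal to $\boldsymbol e^{(j)}$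 is written $\epsilon=\overrightarrow{\sigma|\sigma'}$ when $(\boldsymbol x_{\sigma'}-\boldsymbol x_\sigma)\cdot\boldsymbol e^{(j)}>0$. For $u\in H_{\mathcal E^{(i)},0}$, $\eth_j u=\sum_{\epsilon}(\eth_ju)_{D_\epsilon}\mathbf 1_{D_\epsilon}$ (sum over $\epsilon\in\widetilde{\mathcal E}^{(i)}$, $\epsilon\perp\boldsymbol e^{(j)}$) with $(\eth_ju)_{D_\epsilon}=(u_{\sigma'}-u_\sigma)/d_\epsilon$ if $\epsilon=\overrightarrow{\sigma|\sigma'}$ and $(\eth_ju)_{D_\epsilon}=-u_\sigma\,(\boldsymbol x_{\sigma,\epsilon}-\boldsymbol x_\sigma)\cdot\boldsymbol e^{(j)}/d_\epsilon$ if $\epsilon\in\widetilde{\mathcal E}^{(i)}_{\rm ext}\cap\widetilde{\mathcal E}(D_\sigma)$. Discrete convection: for $\boldsymbol u\in\mathbf H_{\mathcal E,0}$ and $\sigma\in\mathcal E^{(i)}\cap\mathcal E(K)$ let $u_{K,\sigma}=u_\sigma\,\boldsymbol n_{K,\sigma}\cdot\boldsymbol e^{(i)}$. For $i\in\{1,\dots,d\}$, $\sigma\in\mathcal E^{(i)}_{\rm int}$ and $\epsilon\in\widetilde{\mathcal E}(D_\sigma)$, the mass flux $|\epsilon|u_{\sigma,\epsilon}$ is defined by: (a) if $\epsilon$ is orthogonal to $\boldsymbol e^{(i)}$, then $\epsilon\subset K$ with $\mathcal E^{(i)}\cap\mathcal E(K)=\{\sigma,\sigma'\}$ and $|\epsilon|u_{\sigma,\epsilon}=\frac12(-|\sigma|u_{K,\sigma}+|\sigma'|u_{K,\sigma'})$;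 (b) otherwise, with $\sigma=K|L$, $\epsilon$ is the union of halves of a face $\tau\in\mathcal E(K)$ and a face $\tau'\in\mathcal E(L)$, and $|\epsilon|u_{\sigma,\epsilon}=\frac12(|\tau|u_{K,\tau}+|\tau'|u_{L,\tau'})$ (this vanishes when $\epsilon\subset\partial\Omega$). For $v\in H_{\mathcal E^{(i)},0}$ and $\epsilon=\sigma|\sigma'$, $v^*_\epsilon$ is either the centred value $(v_\sigma+v_{\sigma'})/2$ or the upwind value ($v_\sigma$ if $u_{\sigma,\epsilon}\ge0$, $v_{\sigma'}$ otherwise); one of these two choices is fixed once for all. For $\boldsymbol u\in\mathbf H_{\mathcal E,0}$, $v,w\in H_{\mathcal E^{(i)},0}$: $b_{\mathcal E^{(i)}}(\boldsymbol u,v,w)=\sum_{\sigma\in\mathcal E^{(i)}_{\rm int}}w_\sigma\sum_{\epsilon\in\widetilde{\mathcal E}(D_\sigma)}|\epsilon|u_{\sigma,\epsilon}v^*_\epsilon$ (terms with $\epsilon\subset\partial\Omega$ vanish since the flux is zero), and $b_{\mathcal E}(\boldsymbol u,\boldsymbol v,\boldsymbol w)=\sum_{i=1}^db_{\mathcal E^{(i)}}(\boldsymbol u,v_i,w_i)$. Velocity reconstruction operators: for $i,j\in\{1,\dots,d\}$, a reconstruction operator $\mathcal R^{(i,j)}_{\widetilde{\mathcal E}}:H_{\mathcal E^{(i)},0}\to L^2(\Omega)$ is a map of the form $\mathcal R^{(i,j)}_{\widetilde{\mathcal E}}v=\sum_{\epsilon\in\widetilde{\mathcal E}^{(i)},\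 \epsilon\perp\boldsymbol e^{(j)}}(\mathcal R^{(i,j)}_{\widetilde{\mathcal E}}v)_{D_\epsilon}\mathbf 1_{D_\epsilon}$ (the $D_\epsilon$ being the cells of the $(i,j)$-partition) with $(\mathcal R^{(i,j)}_{\widetilde{\mathcal E}}v)_{D_\epsilon}=\alpha_\epsilon v_\sigma+(1-\alpha_\epsilon)v_{\sigma'}$ if $\epsilon=\sigma|\sigma'$ and $(\mathcal R^{(i,j)}_{\widetilde{\mathcal E}}v)_{D_\epsilon}=\alpha_\epsilon v_\sigma$ if $\epsilon\in\widetilde{\mathcal E}^{(i)}_{\rm ext}\cap\widetilde{\mathcal E}(D_\sigma)$, where the weights $\alpha_\epsilon\in[0,1]$ are arbitrary. *)

theory Defs
  imports "HOL-Analysis.Analysis"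
begin

text \<open>
  The space dimension d is CARD('n) (assumed to be 2 or 3 in the theorem);
  points of R^d are of type real^'n and the canonical basis vectors are indexed by 'n.
  The mesh is the restriction of a Cartesian (tensor product) grid to the union of a finite
  set C of primal cells: g k is the strictly increasing sequence of grid nodes in direction k,
  and the primal cell with multi-index m is the box prod_k [g k (m k), g k (m k + 1)].

  All geometric objects (cell centers, face mass centers, dual cell corners) are addressed by
  their "doubled" integer position q :: 'n => int: in direction k, an even value 2p refers to
  the node coordinate g k p and an odd value 2p+1 to the midpoint of [g k p, g k (p+1)].
  Hence a primal cell is an all-odd position, a face of E^(i) is a position which is even in
  direction i only, etc.
\<close>

definition half_coord :: "(int \<Rightarrow> real) \<Rightarrow> int \<Rightarrow> real" where
  "half_coord h q = (if even q then h (q div 2) else (h (q div 2) + h (q div 2 + 1)) / 2)"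

definition span :: "('n \<Rightarrow> int \<Rightarrow> real) \<Rightarrow> 'n \<Rightarrow> int \<Rightarrow> real" where
  "span g k q = half_coord (g k) (q + 1) - half_coord (g k) (q - 1)"

definition cell_set :: "('n::finite \<Rightarrow> int \<Rightarrow> real) \<Rightarrow> ('n \<Rightarrow> int) \<Rightarrow> (real^'n) set" where
  "cell_set g m = {x. \<forall>k. g k (m k) \<le> x$k \<and> x$k \<le> g k (m k + 1)}"

definition Omega :: "('n::finite \<Rightarrow> int \<Rightarrow> real) \<Rightarrow> ('n \<Rightarrow> int) set \<Rightarrow> (real^'n) set" where
  "Omega g C = interior (\<Union>m\<in>C. cell_set g m)"

definition MAC_grid :: "('n::finite \<Rightarrow> int \<Rightarrow> real) \<Rightarrow> ('n \<Rightarrow> int) set \<Rightarrow> bool" where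
  "MAC_grid g C \<longleftrightarrow> finite C \<and> C \<noteq> {} \<and> (\<forall>k. strict_mono (g k)) \<and> connected (Omega g C)"

definition is_cell :: "('n \<Rightarrow> int) set \<Rightarrow> ('n \<Rightarrow> int) \<Rightarrow> bool" where
  "is_cell C q \<longleftrightarrow> (\<forall>k. odd (q k)) \<and> (\<lambda>k. (q k - 1) div 2) \<in> C"

text \<open>Position p is the mass center of a face sigma in E^(i) (i.e. a face of some cell of the mesh),
  resp. of an interior face sigma in E^(i)_int (sigma = K|L with K, L cells of the mesh).\<close>
definition is_face :: "('n \<Rightarrow> int) set \<Rightarrow> 'n \<Rightarrow> ('n \<Rightarrow> int) \<Rightarrow> bool" where
  "is_face C i p \<longleftrightarrow> even (p i) \<and> (\<forall>k. k \<noteq> i \<longrightarrow> odd (p k)) \<and>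
     (is_cell C (p(i := p i - 1)) \<or> is_cell C (p(i := p i + 1)))"

definition int_face :: "('n \<Rightarrow> int) set \<Rightarrow> 'n \<Rightarrow> ('n \<Rightarrow> int) \<Rightarrow> bool" where
  "int_face C i p \<longleftrightarrow> even (p i) \<and> (\<forall>k. k \<noteq> i \<longrightarrow> odd (p k)) \<and>
     is_cell C (p(i := p i - 1)) \<and> is_cell C (p(i := p i + 1))"

text \<open>Discrete velocity fields in H_{E,0}: u i p is the value u_sigma of the i-th component at the
  face of E^(i) with center position p.  Values at boundary faces vanish; values at positions
  which are not faces of E^(i) are irrelevant and are normalised to 0.\<close>
definition H_E0 :: "('n \<Rightarrow> int) set \<Rightarrow> ('n \<Rightarrow> ('n \<Rightarrow> int) \<Rightarrow> real) set" where
  "H_E0 C = {u. \<forall>i p. \<not> int_face C i p \<longrightarrow> u i p = 0}"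

definition face_meas :: "('n::finite \<Rightarrow> int \<Rightarrow> real) \<Rightarrow> 'n \<Rightarrow> ('n \<Rightarrow> int) \<Rightarrow> real" where
  "face_meas g i p = (\<Prod>k\<in>UNIV - {i}. span g k (p k))"

text \<open>Measure |epsilon| of the face of the dual cell D_sigma (sigma with center position p)
  orthogonal to e^(j).\<close>
definition dface_meas :: "('n::finite \<Rightarrow> int \<Rightarrow> real) \<Rightarrow> 'n \<Rightarrow> ('n \<Rightarrow> int) \<Rightarrow> real" where
  "dface_meas g j p = (\<Prod>k\<in>UNIV - {j}. span g k (p k))"

text \<open>u_{K,sigma} = u_sigma n_{K,sigma}.e^(i) for sigma in E^(i) a face of K
  (K, sigma given by their center positions; (x_sigma - x_K).e^(i) has the sign of sigma i - K i).\<close>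
definition uK :: "('n \<Rightarrow> ('n \<Rightarrow> int) \<Rightarrow> real) \<Rightarrow> 'n \<Rightarrow> ('n \<Rightarrow> int) \<Rightarrow> ('n \<Rightarrow> int) \<Rightarrow> real" where
  "uK u i K \<sigma> = u i \<sigma> * sgn (of_int (\<sigma> i - K i))"

text \<open>Mass flux |epsilon| u_{sigma,epsilon} through the face epsilon of D_sigma
  (sigma in E^(i)_int with center position p) which is orthogonal to e^(j) and lies on side
  s in {-1,1} (in direction j) of x_sigma.\<close>
definition mflux :: "('n::finite \<Rightarrow> int \<Rightarrow> real) \<Rightarrow> ('n \<Rightarrow> ('n \<Rightarrow> int) \<Rightarrow> real) \<Rightarrow> 'n \<Rightarrow>
    ('n \<Rightarrow> int) \<Rightarrow> 'n \<Rightarrow> int \<Rightarrow> real" where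
  "mflux g u i p j s =
    (if j = i then
       (let K = p(i := p i + s); \<sigma>' = p(i := p i + 2 * s) in
        (- face_meas g i p * uK u i K p + face_meas g i \<sigma>' * uK u i K \<sigma>') / 2)
     else
       (let K = p(i := p i - 1); L = p(i := p i + 1);
            \<tau> = K(j := K j + s); \<tau>' = L(j := L j + s) in
        (face_meas g j \<tau> * uK u j K \<tau> + face_meas g j \<tau>' * uK u j L \<tau>') / 2))"

definition uflux :: "('n::finite \<Rightarrow> int \<Rightarrow> real) \<Rightarrow> ('n \<Rightarrow> ('n \<Rightarrow> int) \<Rightarrow> real) \<Rightarrow> 'n \<Rightarrow>
    ('n \<Rightarrow> int) \<Rightarrow> 'n \<Rightarrow> int \<Rightarrow> real" where
  "uflux g u i p j s = mflux g u i p j s / dface_meas g j p"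

text \<open>v^*_epsilon for epsilon = sigma|sigma' (sigma' = neighbour of sigma across epsilon);
  upw = True: upwind choice, upw = False: centred choice.\<close>
definition vstar :: "bool \<Rightarrow> ('n::finite \<Rightarrow> int \<Rightarrow> real) \<Rightarrow> ('n \<Rightarrow> ('n \<Rightarrow> int) \<Rightarrow> real) \<Rightarrow> 'n \<Rightarrow>
    (('n \<Rightarrow> int) \<Rightarrow> real) \<Rightarrow> ('n \<Rightarrow> int) \<Rightarrow> 'n \<Rightarrow> int \<Rightarrow> real" where
  "vstar upw g u i v p j s =
    (let \<sigma>' = p(j := p j + 2 * s) in
     if upw then (if uflux g u i p j s \<ge> 0 then v p else v \<sigma>')
     else (v p + v \<sigma>') / 2)"

definition b_E :: "bool \<Rightarrow> ('n::finite \<Rightarrow> int \<Rightarrow> real) \<Rightarrow> ('n \<Rightarrow> int) set \<Rightarrow> 'n \<Rightarrow>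
    ('n \<Rightarrow> ('n \<Rightarrow> int) \<Rightarrow> real) \<Rightarrow> (('n \<Rightarrow> int) \<Rightarrow> real) \<Rightarrow> (('n \<Rightarrow> int) \<Rightarrow> real) \<Rightarrow> real" where
  "b_E upw g C i u v w =
    (\<Sum>p\<in>{p. int_face C i p}. w p *
       (\<Sum>j\<in>UNIV. \<Sum>s\<in>{-1, 1}. mflux g u i p j s * vstar upw g u i v p j s))"

text \<open>Cells D_epsilon of the (i,j)-partition.  For i \<noteq> j they are indexed by the position q
  which is even exactly in directions i and j (midpoint of an edge of the primal mesh), for i = j
  by the cell centers (all-odd positions).  D_epsilon is (the part in Omega of) the closed box
  prod_k [half_coord (q k - 1), half_coord (q k + 1)]; it separates sigma = q - e^(j) and
  sigma' = q + e^(j) (faces of E^(i)).\<close>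
definition ij_pos :: "'n \<Rightarrow> 'n \<Rightarrow> ('n \<Rightarrow> int) \<Rightarrow> bool" where
  "ij_pos i j q \<longleftrightarrow> (\<forall>k. even (q k) \<longleftrightarrow> (i \<noteq> j \<and> (k = i \<or> k = j)))"

definition near_mesh :: "('n \<Rightarrow> int) set \<Rightarrow> ('n \<Rightarrow> int) \<Rightarrow> bool" where
  "near_mesh C q \<longleftrightarrow> (\<exists>m\<in>C. \<forall>k. 2 * m k \<le> q k \<and> q k \<le> 2 * m k + 2)"

definition ij_cells :: "('n \<Rightarrow> int) set \<Rightarrow> 'n \<Rightarrow> 'n \<Rightarrow> ('n \<Rightarrow> int) set" where
  "ij_cells C i j = {q. ij_pos i j q \<and> near_mesh C q}"

definition dbox :: "('n::finite \<Rightarrow> int \<Rightarrow> real) \<Rightarrow> ('n \<Rightarrow> int) \<Rightarrow> (real^'n) set" where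
  "dbox g q = {x. \<forall>k. half_coord (g k) (q k - 1) \<le> x$k \<and> x$k \<le> half_coord (g k) (q k + 1)}"

text \<open>Reconstruction operator R^{(i,j)} with weights alpha applied to v in H_{E^(i),0}.
  (For boundary dual faces the formula alpha v_sigma + (1-alpha) v_sigma' with v_sigma' = 0
  gives exactly the family of values alpha v_sigma, alpha in [0,1].)\<close>
definition recon :: "('n::finite \<Rightarrow> int \<Rightarrow> real) \<Rightarrow> ('n \<Rightarrow> int) set \<Rightarrow> 'n \<Rightarrow> 'n \<Rightarrow>
    (('n \<Rightarrow> int) \<Rightarrow> real) \<Rightarrow> (('n \<Rightarrow> int) \<Rightarrow> real) \<Rightarrow> real^'n \<Rightarrow> real" where
  "recon g C i j \<alpha> v = (\<lambda>x. \<Sum>q\<in>ij_cells C i j.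
      (\<alpha> q * v (q(j := q j - 1)) + (1 - \<alpha> q) * v (q(j := q j + 1))) * indicator (dbox g q) x)"

definition eth_val :: "('n::finite \<Rightarrow> int \<Rightarrow> real) \<Rightarrow> ('n \<Rightarrow> int) set \<Rightarrow> 'n \<Rightarrow> 'n \<Rightarrow>
    (('n \<Rightarrow> int) \<Rightarrow> real) \<Rightarrow> ('n \<Rightarrow> int) \<Rightarrow> real" where
  "eth_val g C i j v q =
    (let \<sigma> = q(j := q j - 1); \<sigma>' = q(j := q j + 1) in
     if is_face C i \<sigma> \<and> is_face C i \<sigma>' then
       (v \<sigma>' - v \<sigma>) / (half_coord (g j) (q j + 1) - half_coord (g j) (q j - 1))
     else if is_face C i \<sigma> then
       - v \<sigma> / (half_coord (g j) (q j) - half_coord (g j) (q j - 1))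
     else if is_face C i \<sigma>' then
       v \<sigma>' / (half_coord (g j) (q j + 1) - half_coord (g j) (q j))
     else 0)"

definition eth :: "('n::finite \<Rightarrow> int \<Rightarrow> real) \<Rightarrow> ('n \<Rightarrow> int) set \<Rightarrow> 'n \<Rightarrow> 'n \<Rightarrow>
    (('n \<Rightarrow> int) \<Rightarrow> real) \<Rightarrow> real^'n \<Rightarrow> real" where
  "eth g C i j v = (\<lambda>x. \<Sum>q\<in>ij_cells C i j. eth_val g C i j v q * indicator (dbox g q) x)"

end

theory Submission
  imports Defs
begin

lemma hc_step:
  assumes "strict_mono h" shows "half_coord h q < half_coord h (q+1)"
proof (cases "even q")
  case True
  then have d: "(q+1) div 2 = q div 2" by presburger
  have "h (q div 2) < h (q div 2 + 1)" using assms by (simp add: strict_mono_def)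
  then show ?thesis using True d by (simp add: half_coord_def)
next
  case False
  then have d: "(q+1) div 2 = q div 2 + 1" by presburger
  have "h (q div 2) < h (q div 2 + 1)" using assms by (simp add: strict_mono_def)
  then show ?thesis using False d by (simp add: half_coord_def)
qed

lemma hc_strict:
  assumes "strict_mono h" "a < b" shows "half_coord h a < half_coord h b"
proof -
  have "\<And>k::nat. half_coord h a < half_coord h (a + 1 + int k)"
  proof -
    fix k :: nat show "half_coord h a < half_coord h (a + 1 + int k)"
    proof (induction k)
      case 0 then show ?case using hc_step[OF assms(1)] by simp
    next
      case (Suc k)
      have "half_coord h (a + 1 + int k) < half_coord h (a + 1 + int k + 1)" by (rule hc_step[OF assms(1)])
      then show ?case using Suc by (simp add: add.assoc)
    qed
  qed
  from this[of "nat (b - a - 1)"] show ?thesis using assms(2) by simp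
qed

lemma hc_mono:
  assumes "strict_mono h" "a \<le> b" shows "half_coord h a \<le> half_coord h b"
  using hc_strict[OF assms(1), of a b] assms(2) by (cases "a = b") auto

lemma hc_odd:
  assumes "odd c"
  shows "h ((c - 1) div 2) = half_coord h (c - 1)" "h ((c - 1) div 2 + 1) = half_coord h (c + 1)"
proof -
  have "even (c - 1)" "even (c+1)" using assms by auto
  moreover have "(c + 1) div 2 = (c - 1) div 2 + 1" using assms by presburger
  ultimately show "h ((c - 1) div 2) = half_coord h (c - 1)" "h ((c - 1) div 2 + 1) = half_coord h (c + 1)"
    by (simp_all add: half_coord_def)
qed

lemma span_pos: "strict_mono (g k) \<Longrightarrow> span g k q > 0"
  unfolding span_def using hc_strict[of "g k" "q - 1" "q + 1"] by simp

definition lov :: "('n::finite \<Rightarrow> int \<Rightarrow> real) \<Rightarrow> ('n \<Rightarrow> int) \<Rightarrow> real^'n" where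
  "lov g q = (\<chi> k. half_coord (g k) (q k - 1))"
definition hiv :: "('n::finite \<Rightarrow> int \<Rightarrow> real) \<Rightarrow> ('n \<Rightarrow> int) \<Rightarrow> real^'n" where
  "hiv g q = (\<chi> k. half_coord (g k) (q k + 1))"

lemma dbox_cbox: "dbox g q = cbox (lov g q) (hiv g q)"
  by (auto simp: dbox_def mem_box_cart lov_def hiv_def)

lemma cell_dbox:
  assumes "is_cell C c"
  shows "dbox g c \<subseteq> (\<Union>m\<in>C. cell_set g m)"
proof -
  have "dbox g c = cell_set g (\<lambda>k. (c k - 1) div 2)"
    using assms unfolding is_cell_def dbox_def cell_set_def by (simp add: hc_odd)
  then show ?thesis using assms unfolding is_cell_def by blast
qed

lemma measure_cbox_cart:
  assumes "\<And>k. (a::real^'n::finite) $ k \<le> b $ k"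
  shows "measure lborel (cbox a b) = (\<Prod>k\<in>UNIV. b $ k - a $ k)"
    "measure lborel (box a b) = (\<Prod>k\<in>UNIV. b $ k - a $ k)"
proof -
  have "a \<in> cbox a b" using assms by (simp add: mem_box_cart)
  then have ne: "cbox a b \<noteq> {}" by blast
  show 1: "measure lborel (cbox a b) = (\<Prod>k\<in>UNIV. b $ k - a $ k)"
    using content_cbox_cart[OF ne] by simp
  show "measure lborel (box a b) = (\<Prod>k\<in>UNIV. b $ k - a $ k)"
    using 1 by (simp add: measure_lborel_box_eq measure_lborel_cbox_eq)
qed

definition MM :: "('n::finite \<Rightarrow> int \<Rightarrow> real) \<Rightarrow> ('n \<Rightarrow> int) set \<Rightarrow> ('n \<Rightarrow> int) \<Rightarrow> real" where
  "MM g C q = measure lborel (Omega g C \<inter> dbox g q)"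

lemma Omega_sets: "Omega g C \<in> sets lborel"
  unfolding Omega_def by (simp add: borel_open)

lemma dbox_sets: "dbox g q \<in> sets lborel"
  unfolding dbox_cbox by (simp add: borel_closed)

lemma Od_sets: "Omega g C \<inter> dbox g q \<in> sets lborel"
  using Omega_sets dbox_sets by (rule sets.Int)

lemma Od_fmeas: "Omega g C \<inter> dbox g q \<in> fmeasurable lborel"
proof (rule fmeasurableI2[of "dbox g q"])
  show "dbox g q \<in> fmeasurable lborel" unfolding dbox_cbox by simp
qed (auto intro: Od_sets[simplified])

lemma measure_dbox:
  assumes "\<forall>k. strict_mono (g k)"
  shows "measure lborel (dbox g q) = (\<Prod>k\<in>UNIV. span g k (q k))"
proof -
  have "\<And>k. lov g q $ k \<le> hiv g q $ k" using span_pos[of g] assms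
    by (simp add: lov_def hiv_def span_def less_imp_le)
  then show ?thesis unfolding dbox_cbox by (simp add: measure_cbox_cart lov_def hiv_def span_def)
qed

lemma MM_upper:
  assumes "\<forall>k. strict_mono (g k)"
  shows "MM g C q \<le> (\<Prod>k\<in>UNIV. span g k (q k))"
proof -
  have "MM g C q \<le> measure lborel (dbox g q)" unfolding MM_def
  proof (rule measure_mono_fmeasurable)
    show "dbox g q \<in> fmeasurable lborel" unfolding dbox_cbox by simp
  qed (auto intro: Od_sets[simplified])
  then show ?thesis using measure_dbox[OF assms] by simp
qed

lemma MM_lower:
  assumes "cbox a b \<subseteq> (\<Union>m\<in>C. cell_set g m)" "cbox a b \<subseteq> dbox g q" "\<And>k. a $ k \<le> b $ k"
  shows "(\<Prod>k\<in>UNIV. b $ k - a $ k) \<le> MM g C q"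
proof -
  have "box a b \<subseteq> Omega g C" unfolding Omega_def
    using interior_mono[OF assms(1)] by simp
  moreover have "box a b \<subseteq> dbox g q" using assms(2) box_subset_cbox by blast
  ultimately have "measure lborel (box a b) \<le> MM g C q" unfolding MM_def
    by (intro measure_mono_fmeasurable) (auto simp: Od_fmeas borel_open)
  then show ?thesis using measure_cbox_cart(2)[of a b] assms(3) by simp
qed

lemma sum_ind_single:
  assumes "q0 \<in> Q" "x \<in> B q0" "\<And>q. q \<in> Q \<Longrightarrow> q \<noteq> q0 \<Longrightarrow> x \<notin> B q" "finite Q"
  shows "(\<Sum>q\<in>Q. f q * indicator (B q) x) = (f q0 :: real)"
proof -
  have "(\<Sum>q\<in>Q. f q * indicator (B q) x) = f q0 * indicator (B q0) x + (\<Sum>q\<in>Q - {q0}. f q * indicator (B q) x)"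
    by (rule sum.remove[OF assms(4,1)])
  also have "(\<Sum>q\<in>Q - {q0}. f q * indicator (B q) x) = 0"
    by (rule sum.neutral) (use assms(3) in \<open>auto simp: indicator_def\<close>)
  finally show ?thesis using assms(2) by simp
qed

lemma int3:
  fixes Q :: "'q set" and lo hi :: "'q \<Rightarrow> real^'n::finite"
  assumes "finite Q" "A \<in> sets lborel"
    and disj: "\<And>q q'. q \<in> Q \<Longrightarrow> q' \<in> Q \<Longrightarrow> q \<noteq> q' \<Longrightarrow> box (lo q) (hi q) \<inter> box (lo q') (hi q') = {}"
  shows "(LINT x:A|lborel. (\<Sum>q\<in>Q. a q * indicator (cbox (lo q) (hi q)) x) *
            (\<Sum>q\<in>Q. b q * indicator (cbox (lo q) (hi q)) x) * (\<Sum>q\<in>Q. c q * indicator (cbox (lo q) (hi q)) x))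
       = (\<Sum>q\<in>Q. a q * b q * c q * measure lborel (A \<inter> cbox (lo q) (hi q)))"
proof -
  define B where "B q = cbox (lo q) (hi q)" for q
  define N where "N = (\<Union>q\<in>Q. cbox (lo q) (hi q) - box (lo q) (hi q))"
  have "N \<in> null_sets lborel" unfolding N_def
    using assms(1) null_sets_cbox_Diff_box by (intro null_sets.finite_UN) auto
  then have ae: "AE x in lborel. x \<notin> N" by (rule AE_not_in)
  have pw: "indicator A x *\<^sub>R ((\<Sum>q\<in>Q. a q * indicator (B q) x) *
            (\<Sum>q\<in>Q. b q * indicator (B q) x) * (\<Sum>q\<in>Q. c q * indicator (B q) x))
          = (\<Sum>q\<in>Q. a q * b q * c q * indicator (A \<inter> B q) x)" if "x \<notin> N" for x
  proof (cases "\<exists>q0\<in>Q. x \<in> B q0")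
    case True
    then obtain q0 where q0: "q0 \<in> Q" "x \<in> B q0" by blast
    have bx: "x \<in> box (lo q0) (hi q0)" using q0 that unfolding N_def B_def by blast
    have other: "x \<notin> B q" if "q \<in> Q" "q \<noteq> q0" for q
    proof
      assume "x \<in> B q"
      then have "x \<in> box (lo q) (hi q)" using \<open>x \<notin> N\<close> that unfolding N_def B_def by blast
      then show False using disj[OF that(1) q0(1) that(2)] bx by blast
    qed
    have "(\<Sum>q\<in>Q. a q * b q * c q * indicator (A \<inter> B q) x) = a q0 * b q0 * c q0 * indicator (A \<inter> B q0) x"
      using sum_ind_single[of q0 Q x "\<lambda>q. A \<inter> B q" "\<lambda>q. a q * b q * c q"] q0 other assms(1)
        by (cases "x \<in> A") (simp_all add: indicator_def)
    then show ?thesis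
      using sum_ind_single[of q0 Q x B a, OF q0 other assms(1)] sum_ind_single[of q0 Q x B b, OF q0 other assms(1)]
        sum_ind_single[of q0 Q x B c, OF q0 other assms(1)] q0(2) by (simp add: indicator_def)
  next
    case False
    then show ?thesis by (simp add: indicator_def)
  qed
  have "(LINT x:A|lborel. (\<Sum>q\<in>Q. a q * indicator (B q) x) *
            (\<Sum>q\<in>Q. b q * indicator (B q) x) * (\<Sum>q\<in>Q. c q * indicator (B q) x))
      = (LINT x|lborel. (\<Sum>q\<in>Q. a q * b q * c q * indicator (A \<inter> B q) x))"
    unfolding set_lebesgue_integral_def
  proof (rule integral_cong_AE)
    show "AE x in lborel. indicator A x *\<^sub>R ((\<Sum>q\<in>Q. a q * indicator (B q) x) *
            (\<Sum>q\<in>Q. b q * indicator (B q) x) * (\<Sum>q\<in>Q. c q * indicator (B q) x))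
          = (\<Sum>q\<in>Q. a q * b q * c q * indicator (A \<inter> B q) x)"
      using ae by eventually_elim (rule pw)
  qed (use assms(2) in \<open>auto simp: B_def\<close>)
  also have "\<dots> = (\<Sum>q\<in>Q. a q * b q * c q * measure lborel (A \<inter> B q))"
  proof -
    have fin: "A \<inter> B q \<in> sets lborel" "emeasure lborel (A \<inter> B q) < \<infinity>" for q
    proof -
      show s: "A \<inter> B q \<in> sets lborel" using assms(2) unfolding B_def by simp
      have "emeasure lborel (A \<inter> B q) \<le> emeasure lborel (B q)"
        by (rule emeasure_mono) (auto simp: B_def)
      then show "emeasure lborel (A \<inter> B q) < \<infinity>" unfolding B_def
        using emeasure_lborel_cbox_finite le_less_trans by blast
    qed
    show ?thesis
      by (subst Bochner_Integration.integral_sum)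
         (auto simp: fin Bochner_Integration.integral_indicator intro!: integrable_real_indicator fin[simplified])
  qed
  finally show ?thesis unfolding B_def .
qed

lemma ij_cells_sym: "ij_cells C j i = ij_cells C i j"
  unfolding ij_cells_def ij_pos_def by auto

lemma ij_cells_finite:
  fixes C :: "('n::finite \<Rightarrow> int) set"
  assumes "finite C" shows "finite (ij_cells C i j)"
proof -
  have "ij_cells C i j \<subseteq> (\<Union>m\<in>C. Pi\<^sub>E UNIV (\<lambda>k. {2 * m k .. 2 * m k + 2}))"
    unfolding ij_cells_def near_mesh_def PiE_UNIV_domain by auto
  moreover have "finite (\<Union>m\<in>C. Pi\<^sub>E UNIV (\<lambda>k. {2 * m k .. 2 * m k + 2}))"
    using assms by (intro finite_UN_I) (auto intro!: finite_PiE)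
  ultimately show ?thesis by (rule finite_subset)
qed

lemma ij_box_disj:
  assumes sm: "\<forall>k. strict_mono (g k)" and q: "q \<in> ij_cells C i j" and q': "q' \<in> ij_cells C i j" and ne: "q \<noteq> q'"
  shows "box (lov g q) (hiv g q) \<inter> box (lov g q') (hiv g q') = {}"
proof -
  obtain k where k: "q k \<noteq> q' k" using ne by (auto simp: fun_eq_iff)
  have par: "even (q k) = even (q' k)" using q q' unfolding ij_cells_def ij_pos_def by auto
  have sep: False if "a k + 2 \<le> b k" "x \<in> box (lov g a) (hiv g a)" "x \<in> box (lov g b) (hiv g b)" for a b x
  proof -
    have 1: "x $ k < half_coord (g k) (a k + 1)" using that(2) by (simp add: mem_box_cart hiv_def)
    have 2: "half_coord (g k) (a k + 1) \<le> half_coord (g k) (b k - 1)" using hc_mono[of "g k"] sm that(1) by simp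
    have 3: "half_coord (g k) (b k - 1) < x $ k" using that(3) by (simp add: mem_box_cart lov_def)
    show False using 1 2 3 by linarith
  qed
  show ?thesis
  proof (cases "q k < q' k")
    case True
    then have "q k + 2 \<le> q' k" using par by presburger
    then show ?thesis using sep[of q q'] by blast
  next
    case False
    then have "q' k + 2 \<le> q k" using par k by presburger
    then show ?thesis using sep[of q' q] by blast
  qed
qed

lemma upd_eqs:
  fixes q :: "'n \<Rightarrow> int"
  assumes "i \<noteq> j"
  shows "(q(j := q j - 1))(i := q i - 1, j := q j) = q(i := q i - 1)"
    "(q(j := q j - 1))(i := q i + 1, j := q j) = q(i := q i + 1)"
    "(q(j := q j + 1))(i := q i - 1, j := q j) = q(i := q i - 1)"
    "(q(j := q j + 1))(i := q i + 1, j := q j) = q(i := q i + 1)"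
  using assms by (auto simp: fun_eq_iff)

lemma mflux_p:
  "mflux g u i (q(j := q j - 1)) j 1 =
     (face_meas g j (q(i := q i - 1)) * u j (q(i := q i - 1)) + face_meas g j (q(i := q i + 1)) * u j (q(i := q i + 1))) / 2"
proof (cases "j = i")
  case True
  then show ?thesis by (simp add: mflux_def Let_def uK_def add.commute)
next
  case False
  then show ?thesis by (simp add: mflux_def Let_def uK_def upd_eqs)
qed

lemma mflux_m:
  "mflux g u i (q(j := q j + 1)) j (-1) =
     - (face_meas g j (q(i := q i - 1)) * u j (q(i := q i - 1)) + face_meas g j (q(i := q i + 1)) * u j (q(i := q i + 1))) / 2"
proof (cases "j = i")
  case True
  then show ?thesis by (simp add: mflux_def Let_def uK_def add.commute)
next
  case False
  then show ?thesis by (simp add: mflux_def Let_def uK_def upd_eqs)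
qed

lemma dface_upd: "dface_meas g j (q(j := x)) = dface_meas g j q"
  unfolding dface_meas_def by (rule prod.cong) auto

lemma dface_pos: "\<forall>k. strict_mono (g k) \<Longrightarrow> dface_meas g j q > 0"
  unfolding dface_meas_def by (rule prod_pos) (simp add: span_pos)

lemma face_pos: "\<forall>k. strict_mono (g k) \<Longrightarrow> face_meas g j q > 0"
  unfolding face_meas_def by (rule prod_pos) (simp add: span_pos)

definition av :: "bool \<Rightarrow> ('n::finite \<Rightarrow> int \<Rightarrow> real) \<Rightarrow> ('n \<Rightarrow> ('n \<Rightarrow> int) \<Rightarrow> real) \<Rightarrow> 'n \<Rightarrow> 'n \<Rightarrow> ('n \<Rightarrow> int) \<Rightarrow> real" where
  "av upw g u i j q = (if upw then (if uflux g u i (q(j := q j - 1)) j 1 \<ge> 0 then 1 else 0) else 1/2)"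

lemma av_range: "0 \<le> av upw g u i j q \<and> av upw g u i j q \<le> 1"
  unfolding av_def by auto

lemma lhs_q:
  fixes g :: "'n::finite \<Rightarrow> int \<Rightarrow> real" and u :: "'n \<Rightarrow> ('n \<Rightarrow> int) \<Rightarrow> real"
    and i j :: 'n and q :: "'n \<Rightarrow> int"
  assumes sm: "\<forall>k. strict_mono (g k)"
  defines "F \<equiv> (face_meas g j (q(i := q i - 1)) * u j (q(i := q i - 1)) + face_meas g j (q(i := q i + 1)) * u j (q(i := q i + 1))) / 2"
  shows "w (q(j := q j - 1)) * (mflux g u i (q(j := q j - 1)) j 1 * vstar upw g u i v (q(j := q j - 1)) j 1)
       + w (q(j := q j + 1)) * (mflux g u i (q(j := q j + 1)) j (-1) * vstar upw g u i v (q(j := q j + 1)) j (-1))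
       = F * (av upw g u i j q * v (q(j := q j - 1)) + (1 - av upw g u i j q) * v (q(j := q j + 1)))
           * (w (q(j := q j - 1)) - w (q(j := q j + 1)))"
proof (cases "F = 0")
  case True
  have m1: "mflux g u i (q(j := q j - 1)) j 1 = F" by (simp add: mflux_p F_def)
  have m2: "mflux g u i (q(j := q j + 1)) j (-1) = - F" unfolding mflux_m F_def by linarith
  show ?thesis by (simp add: m1 m2 True)
next
  case False
  have D: "dface_meas g j q > 0" using dface_pos[OF sm] .
  have u1: "uflux g u i (q(j := q j - 1)) j 1 = F / dface_meas g j q"
    by (simp add: uflux_def mflux_p dface_upd F_def)
  have u2: "uflux g u i (q(j := q j + 1)) j (-1) = - F / dface_meas g j q"
  proof -
    have "mflux g u i (q(j := q j + 1)) j (-1) = - F" unfolding mflux_m F_def by linarith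
    then show ?thesis by (simp add: uflux_def dface_upd)
  qed
  have e1: "(q(j := q j - 1))(j := q j - 1 + 2) = q(j := q j + 1)" by (simp add: fun_eq_iff)
  have e2: "(q(j := q j + 1))(j := q j + 1 + 2 * - 1) = q(j := q j - 1)" by (simp add: fun_eq_iff)
  have m1: "mflux g u i (q(j := q j - 1)) j 1 = F" by (simp add: mflux_p F_def)
  have m2: "mflux g u i (q(j := q j + 1)) j (-1) = - F" unfolding mflux_m F_def by linarith
  have vs: "vstar upw g u i v (q(j := q j - 1)) j 1 = av upw g u i j q * v (q(j := q j - 1)) + (1 - av upw g u i j q) * v (q(j := q j + 1))
     \<and> vstar upw g u i v (q(j := q j + 1)) j (-1) = av upw g u i j q * v (q(j := q j - 1)) + (1 - av upw g u i j q) * v (q(j := q j + 1))"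
  proof (cases upw)
    case True
    show ?thesis
    proof (cases "F > 0")
      case pos: True
      have "uflux g u i (q(j := q j - 1)) j 1 \<ge> 0" "\<not> uflux g u i (q(j := q j + 1)) j (-1) \<ge> 0"
        unfolding u1 u2 using pos D by (auto simp: divide_less_0_iff zero_le_divide_iff divide_le_0_iff)
      then show ?thesis using True unfolding vstar_def Let_def av_def e1[simplified] e2[simplified] by (simp add: add.commute)
    next
      case neg: False
      then have "F < 0" using \<open>F \<noteq> 0\<close> by simp
      then have "\<not> uflux g u i (q(j := q j - 1)) j 1 \<ge> 0" "uflux g u i (q(j := q j + 1)) j (-1) \<ge> 0"
        unfolding u1 u2 using D by (auto simp: divide_less_0_iff zero_le_divide_iff divide_le_0_iff)
      then show ?thesis using True unfolding vstar_def Let_def av_def e1[simplified] e2[simplified] by (simp add: add.commute)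
    qed
  next
    case False
    then show ?thesis unfolding vstar_def Let_def av_def e1[simplified] e2[simplified] by (simp add: add.commute)
  qed
  show ?thesis unfolding m1 m2 vs[THEN conjunct1] vs[THEN conjunct2] by (simp add: algebra_simps)
qed

lemma hc_even:
  assumes "even c"
  shows "2 * (half_coord h c - half_coord h (c - 1)) = half_coord h c - half_coord h (c - 2)"
    "2 * (half_coord h (c + 1) - half_coord h c) = half_coord h (c + 2) - half_coord h c"
proof -
  have d: "(c - 1) div 2 = c div 2 - 1" "(c - 2) div 2 = c div 2 - 1" "(c + 1) div 2 = c div 2" "(c + 2) div 2 = c div 2 + 1"
    "odd (c - 1)" "odd (c + 1)" "even (c - 2)" "even (c + 2)"
    using assms by presburger+
  have h: "half_coord h c = h (c div 2)" "half_coord h (c - 1) = (h (c div 2 - 1) + h (c div 2)) / 2"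
    "half_coord h (c - 2) = h (c div 2 - 1)" "half_coord h (c + 1) = (h (c div 2) + h (c div 2 + 1)) / 2"
    "half_coord h (c + 2) = h (c div 2 + 1)"
    using assms d by (simp_all add: half_coord_def)
  show "2 * (half_coord h c - half_coord h (c - 1)) = half_coord h c - half_coord h (c - 2)"
    unfolding h by (simp add: field_simps)
  show "2 * (half_coord h (c + 1) - half_coord h c) = half_coord h (c + 2) - half_coord h c"
    unfolding h by (simp add: field_simps)
qed

lemma span_even:
  assumes "even c"
  shows "span g k (c - 1) = 2 * (half_coord (g k) c - half_coord (g k) (c - 1))"
    "span g k (c + 1) = 2 * (half_coord (g k) (c + 1) - half_coord (g k) c)"
    "span g k (c - 1) + span g k (c + 1) = 2 * span g k c"
proof -
  have a: "c - 1 - 1 = c - 2" "c + 1 + 1 = c + 2" by simp_all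
  show 1: "span g k (c - 1) = 2 * (half_coord (g k) c - half_coord (g k) (c - 1))"
    using hc_even(1)[OF assms, of "g k"] unfolding span_def a by simp
  show 2: "span g k (c + 1) = 2 * (half_coord (g k) (c + 1) - half_coord (g k) c)"
    using hc_even(2)[OF assms, of "g k"] unfolding span_def a by simp
  show "span g k (c - 1) + span g k (c + 1) = 2 * span g k c"
    by (simp only: 1 2) (simp add: span_def algebra_simps)
qed

lemma cover:
  assumes sm: "\<forall>k. strict_mono (g k)" and cell: "is_cell C c"
    and near: "\<And>k. c k = q k \<or> c k = q k - 1 \<or> c k = q k + 1"
    and x: "\<And>k. half_coord (g k) (q k - 1) \<le> x $ k \<and> x $ k \<le> half_coord (g k) (q k + 1)"
    and side: "\<And>k. (c k = q k - 1 \<longrightarrow> x $ k \<le> half_coord (g k) (q k)) \<and> (c k = q k + 1 \<longrightarrow> half_coord (g k) (q k) \<le> x $ k)"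
  shows "x \<in> (\<Union>m\<in>C. cell_set g m)"
proof -
  have "x \<in> dbox g c" unfolding dbox_def
  proof (intro CollectI allI)
    fix k
    have m1: "half_coord (g k) (q k - 2) \<le> half_coord (g k) (q k - 1)"
      and m2: "half_coord (g k) (q k + 1) \<le> half_coord (g k) (q k + 2)"
      using hc_mono[of "g k"] sm by auto
    show "half_coord (g k) (c k - 1) \<le> x $ k \<and> x $ k \<le> half_coord (g k) (c k + 1)"
    proof -
      consider (a) "c k = q k" | (b) "c k = q k - 1" | (c) "c k = q k + 1" using near[of k] by blast
      then show ?thesis
      proof cases
        case a then show ?thesis using x[of k] by simp
      next
        case b
        then have e: "half_coord (g k) (c k - 1) = half_coord (g k) (q k - 2)" "half_coord (g k) (c k + 1) = half_coord (g k) (q k)" by simp_all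
        have "x $ k \<le> half_coord (g k) (q k)" using side[of k] b by simp
        then show ?thesis using x[of k] m1 e by linarith
      next
        case c
        then have e: "half_coord (g k) (c k - 1) = half_coord (g k) (q k)" "half_coord (g k) (c k + 1) = half_coord (g k) (q k + 2)" by (simp_all add: add.commute)
        have "half_coord (g k) (q k) \<le> x $ k" using side[of k] c by simp
        then show ?thesis using x[of k] m2 e by linarith
      qed
    qed
  qed
  then show ?thesis using cell_dbox[OF cell] by blast
qed

lemma prod_split2:
  fixes f :: "'a::finite \<Rightarrow> 'b::comm_monoid_mult"
  assumes "i \<noteq> j"
  shows "(\<Prod>k\<in>UNIV. f k) = f i * f j * (\<Prod>k\<in>UNIV - {i, j}. f k)"
    "(\<Prod>k\<in>UNIV - {j}. f k) = f i * (\<Prod>k\<in>UNIV - {i, j}. f k)"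
    "(\<Prod>k\<in>UNIV - {i}. f k) = f j * (\<Prod>k\<in>UNIV - {i, j}. f k)"
proof -
  have "(\<Prod>k\<in>UNIV. f k) = f i * (\<Prod>k\<in>UNIV - {i}. f k)" by (rule prod.remove) auto
  moreover have "(\<Prod>k\<in>UNIV - {i}. f k) = f j * (\<Prod>k\<in>UNIV - {i} - {j}. f k)"
    using assms by (intro prod.remove) auto
  moreover have "(\<Prod>k\<in>UNIV - {j}. f k) = f i * (\<Prod>k\<in>UNIV - {j} - {i}. f k)"
    using assms by (intro prod.remove) auto
  moreover have "UNIV - {i} - {j} = UNIV - {i, j}" "UNIV - {j} - {i} = UNIV - {i, j}" by auto
  ultimately show "(\<Prod>k\<in>UNIV. f k) = f i * f j * (\<Prod>k\<in>UNIV - {i, j}. f k)"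
    "(\<Prod>k\<in>UNIV - {j}. f k) = f i * (\<Prod>k\<in>UNIV - {i, j}. f k)"
    "(\<Prod>k\<in>UNIV - {i}. f k) = f j * (\<Prod>k\<in>UNIV - {i, j}. f k)"
    by (simp_all add: mult.assoc)
qed

lemma side_facts:
  assumes ne: "i \<noteq> j" and s: "s = -1 \<or> s = 1" and f: "int_face C j (q(i := q i + s))"
  shows "even (q i)" "even (q j)" "\<And>k. k \<noteq> i \<Longrightarrow> k \<noteq> j \<Longrightarrow> odd (q k)"
    "is_cell C (q(i := q i + s, j := q j - 1))" "is_cell C (q(i := q i + s, j := q j + 1))"
proof -
  have f1: "even (q j)" "\<And>k. k \<noteq> j \<Longrightarrow> odd ((q(i := q i + s)) k)"
    "is_cell C ((q(i := q i + s))(j := q j - 1))" "is_cell C ((q(i := q i + s))(j := q j + 1))"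
    using f ne unfolding int_face_def by auto
  show "even (q j)" by fact
  have "odd (q i + s)" using f1(2)[of i] ne by simp
  then show "even (q i)" using s by auto
  show "\<And>k. k \<noteq> i \<Longrightarrow> k \<noteq> j \<Longrightarrow> odd (q k)" using f1(2) by force
  show "is_cell C (q(i := q i + s, j := q j - 1))" "is_cell C (q(i := q i + s, j := q j + 1))"
    using f1(3,4) by simp_all
qed

lemma fm_split:
  assumes ne: "i \<noteq> j"
  shows "face_meas g j (q(i := c)) = span g i c * (\<Prod>k\<in>UNIV - {i, j}. span g k (q k))"
proof -
  have "face_meas g j (q(i := c)) = span g i c * (\<Prod>k\<in>UNIV - {i, j}. span g k ((q(i := c)) k))"
    unfolding face_meas_def using prod_split2(2)[OF ne, of "\<lambda>k. span g k ((q(i := c)) k)"] by simp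
  also have "(\<Prod>k\<in>UNIV - {i, j}. span g k ((q(i := c)) k)) = (\<Prod>k\<in>UNIV - {i, j}. span g k (q k))"
    by (rule prod.cong) auto
  finally show ?thesis .
qed

lemma lower_gen:
  fixes g :: "'n::finite \<Rightarrow> int \<Rightarrow> real" and C :: "('n \<Rightarrow> int) set"
  assumes sm: "\<forall>k. strict_mono (g k)" and ne: "i \<noteq> j"
    and lo: "lo \<ge> half_coord (g i) (q i - 1)" and hi: "hi \<le> half_coord (g i) (q i + 1)" and lohi: "lo \<le> hi"
    and cov: "\<And>x. (\<And>k. half_coord (g k) (q k - 1) \<le> x $ k \<and> x $ k \<le> half_coord (g k) (q k + 1)) \<Longrightarrow>
                lo \<le> x $ i \<Longrightarrow> x $ i \<le> hi \<Longrightarrow> x \<in> (\<Union>m\<in>C. cell_set g m)"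
  shows "(hi - lo) * span g j (q j) * (\<Prod>k\<in>UNIV - {i, j}. span g k (q k)) \<le> MM g C q"
proof -
  define A where "A = (\<chi> k. if k = i then lo else half_coord (g k) (q k - 1))"
  define B where "B = (\<chi> k. if k = i then hi else half_coord (g k) (q k + 1))"
  have AB: "A $ k \<le> B $ k" for k
    using lohi hc_mono[of "g k" "q k - 1" "q k + 1"] sm by (simp add: A_def B_def)
  have inb: "half_coord (g k) (q k - 1) \<le> x $ k \<and> x $ k \<le> half_coord (g k) (q k + 1)"
    "lo \<le> x $ i" "x $ i \<le> hi" if "x \<in> cbox A B" for x k
  proof -
    have "A $ k \<le> x $ k" "x $ k \<le> B $ k" "A $ i \<le> x $ i" "x $ i \<le> B $ i" using that by (auto simp: mem_box_cart)
    then show "half_coord (g k) (q k - 1) \<le> x $ k \<and> x $ k \<le> half_coord (g k) (q k + 1)"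
      "lo \<le> x $ i" "x $ i \<le> hi"
      using lo hi by (auto simp: A_def B_def split: if_splits)
  qed
  have "(\<Prod>k\<in>UNIV. B $ k - A $ k) \<le> MM g C q"
  proof (rule MM_lower)
    show "cbox A B \<subseteq> (\<Union>m\<in>C. cell_set g m)" using cov inb by blast
    show "cbox A B \<subseteq> dbox g q" using inb unfolding dbox_def by blast
  qed (rule AB)
  moreover have "(\<Prod>k\<in>UNIV. B $ k - A $ k) = (hi - lo) * span g j (q j) * (\<Prod>k\<in>UNIV - {i, j}. span g k (q k))"
  proof -
    have "(\<Prod>k\<in>UNIV. B $ k - A $ k) = (B $ i - A $ i) * (B $ j - A $ j) * (\<Prod>k\<in>UNIV - {i, j}. B $ k - A $ k)"
      by (rule prod_split2(1)[OF ne])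
    also have "(\<Prod>k\<in>UNIV - {i, j}. B $ k - A $ k) = (\<Prod>k\<in>UNIV - {i, j}. span g k (q k))"
      by (rule prod.cong) (auto simp: A_def B_def span_def)
    finally show ?thesis using ne by (simp add: A_def B_def span_def)
  qed
  ultimately show ?thesis by simp
qed

lemma lower_side:
  fixes g :: "'n::finite \<Rightarrow> int \<Rightarrow> real" and C :: "('n \<Rightarrow> int) set"
  assumes sm: "\<forall>k. strict_mono (g k)" and ne: "i \<noteq> j" and s: "s = -1 \<or> s = 1"
    and f: "int_face C j (q(i := q i + s))"
  shows "\<bar>half_coord (g i) (q i + s) - half_coord (g i) (q i)\<bar> * span g j (q j) * (\<Prod>k\<in>UNIV - {i, j}. span g k (q k)) \<le> MM g C q"
proof -
  note sf = side_facts[OF ne s f]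
  define lo where "lo = (if s = -1 then half_coord (g i) (q i - 1) else half_coord (g i) (q i))"
  define hi where "hi = (if s = -1 then half_coord (g i) (q i) else half_coord (g i) (q i + 1))"
  have m: "half_coord (g i) (q i - 1) \<le> half_coord (g i) (q i)" "half_coord (g i) (q i) \<le> half_coord (g i) (q i + 1)"
    using hc_mono[of "g i"] sm by auto
  have "(hi - lo) * span g j (q j) * (\<Prod>k\<in>UNIV - {i, j}. span g k (q k)) \<le> MM g C q"
  proof (rule lower_gen[OF sm ne])
    show "half_coord (g i) (q i - 1) \<le> lo" "hi \<le> half_coord (g i) (q i + 1)" "lo \<le> hi"
      using m by (auto simp: lo_def hi_def)
    fix x :: "real^'n"
    assume x: "\<And>k. half_coord (g k) (q k - 1) \<le> x $ k \<and> x $ k \<le> half_coord (g k) (q k + 1)"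
      and xi: "lo \<le> x $ i" "x $ i \<le> hi"
    define c where "c = q(i := q i + s, j := if x $ j \<le> half_coord (g j) (q j) then q j - 1 else q j + 1)"
    show "x \<in> (\<Union>m\<in>C. cell_set g m)"
    proof (rule cover[OF sm _ _ x])
      show "is_cell C c" unfolding c_def using sf(4,5) by auto
      show "c k = q k \<or> c k = q k - 1 \<or> c k = q k + 1" for k using s by (auto simp: c_def)
      show "(c k = q k - 1 \<longrightarrow> x $ k \<le> half_coord (g k) (q k)) \<and>
            (c k = q k + 1 \<longrightarrow> half_coord (g k) (q k) \<le> x $ k)" for k
        using s ne xi by (auto simp: c_def lo_def hi_def)
    qed
  qed
  moreover have "hi - lo = \<bar>half_coord (g i) (q i + s) - half_coord (g i) (q i)\<bar>"
    using s m by (auto simp: lo_def hi_def)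
  ultimately show ?thesis by simp
qed

lemma lower_full:
  fixes g :: "'n::finite \<Rightarrow> int \<Rightarrow> real" and C :: "('n \<Rightarrow> int) set"
  assumes sm: "\<forall>k. strict_mono (g k)" and ne: "i \<noteq> j"
    and fa: "int_face C j (q(i := q i - 1))" and fb: "int_face C j (q(i := q i + 1))"
  shows "span g i (q i) * span g j (q j) * (\<Prod>k\<in>UNIV - {i, j}. span g k (q k)) \<le> MM g C q"
proof -
  have fa': "int_face C j (q(i := q i + -1))" using fa by simp
  note sa = side_facts[OF ne _ fa'] and sb = side_facts[OF ne _ fb]
  have "(half_coord (g i) (q i + 1) - half_coord (g i) (q i - 1)) * span g j (q j) * (\<Prod>k\<in>UNIV - {i, j}. span g k (q k)) \<le> MM g C q"
  proof (rule lower_gen[OF sm ne])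
    show "half_coord (g i) (q i - 1) \<le> half_coord (g i) (q i - 1)" "half_coord (g i) (q i + 1) \<le> half_coord (g i) (q i + 1)"
      "half_coord (g i) (q i - 1) \<le> half_coord (g i) (q i + 1)"
      using hc_mono[of "g i"] sm by auto
    fix x :: "real^'n"
    assume x: "\<And>k. half_coord (g k) (q k - 1) \<le> x $ k \<and> x $ k \<le> half_coord (g k) (q k + 1)"
    define c where "c = q(i := if x $ i \<le> half_coord (g i) (q i) then q i - 1 else q i + 1,
                         j := if x $ j \<le> half_coord (g j) (q j) then q j - 1 else q j + 1)"
    show "x \<in> (\<Union>m\<in>C. cell_set g m)"
    proof (rule cover[OF sm _ _ x])
      show "is_cell C c" unfolding c_def using sa(4,5) sb(4,5) by auto
      show "c k = q k \<or> c k = q k - 1 \<or> c k = q k + 1" for k by (auto simp: c_def)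
      show "(c k = q k - 1 \<longrightarrow> x $ k \<le> half_coord (g k) (q k)) \<and>
            (c k = q k + 1 \<longrightarrow> half_coord (g k) (q k) \<le> x $ k)" for k
        using ne by (auto simp: c_def)
    qed
  qed
  then show ?thesis by (simp add: span_def)
qed

definition au :: "('n::finite \<Rightarrow> int \<Rightarrow> real) \<Rightarrow> ('n \<Rightarrow> int) set \<Rightarrow> ('n \<Rightarrow> ('n \<Rightarrow> int) \<Rightarrow> real) \<Rightarrow> 'n \<Rightarrow> 'n \<Rightarrow> ('n \<Rightarrow> int) \<Rightarrow> real" where
  "au g C u i j q = (if j = i then 1/2 else
     (let fa = face_meas g j (q(i := q i - 1)); fb = face_meas g j (q(i := q i + 1));
          ua = u j (q(i := q i - 1)); ub = u j (q(i := q i + 1));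
          M = MM g C q; d = span g j (q j) in
      if ua \<noteq> 0 \<and> ub \<noteq> 0 then fa / (fa + fb) else if ua \<noteq> 0 then fa * d / (2 * M)
      else if ub \<noteq> 0 then 1 - fb * d / (2 * M) else 0))"

lemma HE0_D: "u \<in> H_E0 C \<Longrightarrow> u j p \<noteq> 0 \<Longrightarrow> int_face C j p"
  unfolding H_E0_def by auto

lemma au_ne:
  fixes g :: "'n::finite \<Rightarrow> int \<Rightarrow> real" and C :: "('n \<Rightarrow> int) set"
  assumes sm: "\<forall>k. strict_mono (g k)" and ne: "i \<noteq> j" and uH: "u \<in> H_E0 C"
  shows "0 \<le> au g C u i j q \<and> au g C u i j q \<le> 1 \<and>
    (au g C u i j q * u j (q(i := q i - 1)) + (1 - au g C u i j q) * u j (q(i := q i + 1))) * MM g C q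
      = (face_meas g j (q(i := q i - 1)) * u j (q(i := q i - 1)) + face_meas g j (q(i := q i + 1)) * u j (q(i := q i + 1))) / 2
        * span g j (q j)"
proof -
  define P where "P = (\<Prod>k\<in>UNIV - {i, j}. span g k (q k))"
  define ua where "ua = u j (q(i := q i - 1))"
  define ub where "ub = u j (q(i := q i + 1))"
  define fa where "fa = face_meas g j (q(i := q i - 1))"
  define fb where "fb = face_meas g j (q(i := q i + 1))"
  define d where "d = span g j (q j)"
  define M where "M = MM g C q"
  have P: "P > 0" unfolding P_def by (rule prod_pos) (simp add: span_pos sm)
  have d: "d > 0" unfolding d_def by (simp add: span_pos sm)
  have fa: "fa = span g i (q i - 1) * P" unfolding fa_def P_def by (rule fm_split[OF ne])
  have fb: "fb = span g i (q i + 1) * P" unfolding fb_def P_def by (rule fm_split[OF ne])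
  have fapos: "fa > 0" "fb > 0" unfolding fa_def fb_def by (simp_all add: face_pos sm)
  have Mup: "M \<le> span g i (q i) * d * P"
    using MM_upper[OF sm, of C q] prod_split2(1)[OF ne, of "\<lambda>k. span g k (q k)"] unfolding M_def d_def P_def by simp
  have au: "au g C u i j q = (if ua \<noteq> 0 \<and> ub \<noteq> 0 then fa / (fa + fb) else if ua \<noteq> 0 then fa * d / (2 * M)
      else if ub \<noteq> 0 then 1 - fb * d / (2 * M) else 0)"
    using ne unfolding au_def Let_def ua_def ub_def fa_def fb_def d_def M_def by simp
  have "0 \<le> au g C u i j q \<and> au g C u i j q \<le> 1 \<and>
    (au g C u i j q * ua + (1 - au g C u i j q) * ub) * M = (fa * ua + fb * ub) / 2 * d"
  proof (cases "ua \<noteq> 0 \<and> ub \<noteq> 0")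
    case True
    then have ia: "int_face C j (q(i := q i - 1))" and ib: "int_face C j (q(i := q i + 1))"
      using HE0_D[OF uH, of j "q(i := q i - 1)"] HE0_D[OF uH, of j "q(i := q i + 1)"] unfolding ua_def ub_def by auto
    have ev: "even (q i)" using side_facts(1)[OF ne _ ib] by simp
    have "span g i (q i) * d * P \<le> M" using lower_full[OF sm ne ia ib] unfolding M_def d_def P_def .
    with Mup have MM: "M = span g i (q i) * d * P" by simp
    have sfab: "fa + fb = 2 * span g i (q i) * P"
    proof -
      have "fa + fb = (span g i (q i - 1) + span g i (q i + 1)) * P" unfolding fa fb by (simp only: distrib_right)
      then show ?thesis using span_even(3)[OF ev, of g i] by simp
    qed
    have "au g C u i j q = fa / (fa + fb)" using True au by simp
    moreover have "(fa / (fa + fb) * ua + (1 - fa / (fa + fb)) * ub) * M = (fa * ua + fb * ub) / 2 * d"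
    proof -
      have M2: "M = (fa + fb) * d / 2" using MM sfab by simp
      have nz: "fa + fb \<noteq> 0" using fapos by simp
      have h1: "1 - fa / (fa + fb) = fb / (fa + fb)" using nz by (simp add: field_simps)
      have e1: "fa / (fa + fb) * ua + (1 - fa / (fa + fb)) * ub = (fa * ua + fb * ub) / (fa + fb)"
        unfolding h1 by (simp add: add_divide_distrib)
      have gen: "X / t * (t * d / 2) = X / 2 * d" if "t \<noteq> 0" for X t :: real using that by simp
      show ?thesis unfolding M2 e1 by (rule gen[OF nz])
    qed
    ultimately show ?thesis using fapos by simp
  next
    case False
    show ?thesis
    proof (cases "ua \<noteq> 0")
      case True
      then have ub0: "ub = 0" using False by simp
      have ia: "int_face C j (q(i := q i + -1))" using HE0_D[OF uH, of j "q(i := q i - 1)"] True unfolding ua_def by simp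
      have ev: "even (q i)" using side_facts(1)[OF ne _ ia] by simp
      have lo: "\<bar>half_coord (g i) (q i + -1) - half_coord (g i) (q i)\<bar> * d * P \<le> M"
        using lower_side[OF sm ne _ ia] unfolding M_def d_def P_def by simp
      have hnn: "half_coord (g i) (q i - 1) \<le> half_coord (g i) (q i)" using hc_mono[of "g i" "q i - 1" "q i"] sm by simp
      have ab: "\<bar>half_coord (g i) (q i + -1) - half_coord (g i) (q i)\<bar> = half_coord (g i) (q i) - half_coord (g i) (q i - 1)"
        using hnn by simp
      have "fa * d / 2 = (half_coord (g i) (q i) - half_coord (g i) (q i - 1)) * d * P"
        unfolding fa span_even(1)[OF ev] by (simp add: field_simps)
      then have "fa * d / 2 \<le> M" using lo unfolding ab by linarith
      moreover have "fa * d / 2 > 0" using fapos d by simp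
      ultimately have M0: "M > 0" and le: "fa * d \<le> 2 * M" by linarith+
      then have r: "fa * d / (2 * M) \<le> 1" by (simp add: pos_divide_le_eq)
      have nn: "0 \<le> fa * d / (2 * M)" using M0 fapos d by simp
      have eq: "fa * d / (2 * M) * ua * M = fa * ua / 2 * d" using M0 by simp
      have "au g C u i j q = fa * d / (2 * M)" using True ub0 au by simp
      then show ?thesis using r nn eq ub0 by simp
    next
      case ua0: False
      show ?thesis
      proof (cases "ub \<noteq> 0")
        case True
        have ib: "int_face C j (q(i := q i + 1))" using HE0_D[OF uH, of j "q(i := q i + 1)"] True unfolding ub_def by simp
        have ev: "even (q i)" using side_facts(1)[OF ne _ ib] by simp
        have lo: "\<bar>half_coord (g i) (q i + 1) - half_coord (g i) (q i)\<bar> * d * P \<le> M"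
          using lower_side[OF sm ne _ ib] unfolding M_def d_def P_def by simp
        have hnn: "half_coord (g i) (q i) \<le> half_coord (g i) (q i + 1)" using hc_mono[of "g i" "q i" "q i + 1"] sm by simp
        have ab: "\<bar>half_coord (g i) (q i + 1) - half_coord (g i) (q i)\<bar> = half_coord (g i) (q i + 1) - half_coord (g i) (q i)"
          using hnn by simp
        have "fb * d / 2 = (half_coord (g i) (q i + 1) - half_coord (g i) (q i)) * d * P"
          unfolding fb span_even(2)[OF ev] by (simp add: field_simps)
        then have "fb * d / 2 \<le> M" using lo unfolding ab by linarith
        moreover have "fb * d / 2 > 0" using fapos d by simp
        ultimately have M0: "M > 0" and le: "fb * d \<le> 2 * M" by linarith+
        then have r: "fb * d / (2 * M) \<le> 1" by (simp add: pos_divide_le_eq)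
        have nn: "0 \<le> fb * d / (2 * M)" using M0 fapos d by simp
        have eq: "fb * d / (2 * M) * ub * M = fb * ub / 2 * d" using M0 by simp
        have "au g C u i j q = 1 - fb * d / (2 * M)" using True ua0 au by simp
        then show ?thesis using r nn eq ua0 by simp
      next
        case False
        then show ?thesis using ua0 au by simp
      qed
    qed
  qed
  then show ?thesis unfolding ua_def ub_def fa_def fb_def d_def M_def .
qed

lemma key_ne:
  fixes g :: "'n::finite \<Rightarrow> int \<Rightarrow> real" and C :: "('n \<Rightarrow> int) set"
  assumes sm: "\<forall>k. strict_mono (g k)" and ne: "i \<noteq> j" and uH: "u \<in> H_E0 C"
  shows "(au g C u i j q * u j (q(i := q i - 1)) + (1 - au g C u i j q) * u j (q(i := q i + 1)))
      * eth_val g C i j w q * MM g C q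
    = (face_meas g j (q(i := q i - 1)) * u j (q(i := q i - 1)) + face_meas g j (q(i := q i + 1)) * u j (q(i := q i + 1))) / 2
      * (w (q(j := q j + 1)) - w (q(j := q j - 1)))"
proof -
  define ua where "ua = u j (q(i := q i - 1))"
  define ub where "ub = u j (q(i := q i + 1))"
  define R where "R = au g C u i j q * ua + (1 - au g C u i j q) * ub"
  define F where "F = (face_meas g j (q(i := q i - 1)) * ua + face_meas g j (q(i := q i + 1)) * ub) / 2"
  define d where "d = span g j (q j)"
  have RM: "R * MM g C q = F * d" using au_ne[OF sm ne uH, of q] unfolding R_def F_def d_def ua_def ub_def by simp
  have d: "d > 0" unfolding d_def by (simp add: span_pos sm)
  have "R * eth_val g C i j w q * MM g C q = F * (w (q(j := q j + 1)) - w (q(j := q j - 1)))"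
  proof (cases "ua = 0 \<and> ub = 0")
    case True
    then show ?thesis unfolding R_def F_def by simp
  next
    case False
    then obtain s where s: "s = -1 \<or> s = 1" and f: "int_face C j (q(i := q i + s))"
      using HE0_D[OF uH, of j "q(i := q i - 1)"] HE0_D[OF uH, of j "q(i := q i + 1)"]
      unfolding ua_def ub_def by (metis diff_conv_add_uminus)
    note sf = side_facts[OF ne s f]
    have face: "is_face C i (q(j := q j + t))" if t: "t = -1 \<or> t = 1" for t
    proof -
      have e: "(q(j := q j + t))(i := (q(j := q j + t)) i + s) = q(i := q i + s, j := q j + t)"
        using ne by (auto simp: fun_eq_iff)
      have c: "is_cell C ((q(j := q j + t))(i := (q(j := q j + t)) i + s))"
        unfolding e using sf(4,5) t by auto
      have o: "odd ((q(j := q j + t)) k)" if "k \<noteq> i" for k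
        using sf(2,3) t that by (cases "k = j") auto
      show ?thesis unfolding is_face_def using ne sf(1) o c s by auto
    qed
    have E: "eth_val g C i j w q = (w (q(j := q j + 1)) - w (q(j := q j - 1))) / d"
      using face[of "-1"] face[of 1] unfolding eth_val_def Let_def d_def span_def by simp
    show ?thesis unfolding E using RM d
      by (metis (no_types, lifting) mult.commute mult.left_commute nonzero_mult_div_cancel_left times_divide_eq_right less_irrefl)
  qed
  then show ?thesis unfolding R_def F_def ua_def ub_def .
qed

lemma key_eq:
  fixes g :: "'n::finite \<Rightarrow> int \<Rightarrow> real" and C :: "('n \<Rightarrow> int) set"
  assumes sm: "\<forall>k. strict_mono (g k)" and q: "q \<in> ij_cells C i i"
  shows "(au g C u i i q * u i (q(i := q i - 1)) + (1 - au g C u i i q) * u i (q(i := q i + 1)))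
      * eth_val g C i i w q * MM g C q
    = (face_meas g i (q(i := q i - 1)) * u i (q(i := q i - 1)) + face_meas g i (q(i := q i + 1)) * u i (q(i := q i + 1))) / 2
      * (w (q(i := q i + 1)) - w (q(i := q i - 1)))"
proof -
  have odd: "\<And>k. odd (q k)" using q unfolding ij_cells_def ij_pos_def by auto
  obtain m where m: "m \<in> C" "\<And>k. 2 * m k \<le> q k \<and> q k \<le> 2 * m k + 2"
    using q unfolding ij_cells_def near_mesh_def by auto
  have "(\<lambda>k. (q k - 1) div 2) = m"
  proof
    fix k have "q k = 2 * m k + 1" using m(2)[of k] odd[of k] by presburger
    then show "(q k - 1) div 2 = m k" by simp
  qed
  then have cell: "is_cell C q" unfolding is_cell_def using odd m(1) by simp
  define P where "P = (\<Prod>k\<in>UNIV - {i}. span g k (q k))"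
  define d where "d = span g i (q i)"
  have d: "d > 0" unfolding d_def by (simp add: span_pos sm)
  have fm: "face_meas g i (q(i := c)) = P" for c unfolding face_meas_def P_def by (rule prod.cong) auto
  have V: "(\<Prod>k\<in>UNIV. span g k (q k)) = d * P" unfolding d_def P_def by (rule prod.remove) auto
  have Mup: "MM g C q \<le> d * P" using MM_upper[OF sm, of C q] V by simp
  have "(\<Prod>k\<in>UNIV. hiv g q $ k - lov g q $ k) \<le> MM g C q"
  proof (rule MM_lower)
    show "cbox (lov g q) (hiv g q) \<subseteq> (\<Union>m\<in>C. cell_set g m)" using cell_dbox[OF cell] dbox_cbox by metis
    show "cbox (lov g q) (hiv g q) \<subseteq> dbox g q" using dbox_cbox by blast
    show "lov g q $ k \<le> hiv g q $ k" for k using hc_mono[of "g k" "q k - 1" "q k + 1"] sm by (simp add: lov_def hiv_def)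
  qed
  then have "d * P \<le> MM g C q" using V by (simp add: lov_def hiv_def span_def)
  with Mup have M: "MM g C q = d * P" by simp
  have face: "is_face C i (q(i := q i + t))" if t: "t = -1 \<or> t = 1" for t
  proof -
    have "(q(i := q i + t))(i := q i + t - t) = q" by (simp add: fun_eq_iff)
    then have c: "is_cell C ((q(i := q i + t))(i := q i + t - 1)) \<or> is_cell C ((q(i := q i + t))(i := q i + t + 1))"
      using cell t by auto
    show ?thesis unfolding is_face_def using odd t c by auto
  qed
  have E: "eth_val g C i i w q = (w (q(i := q i + 1)) - w (q(i := q i - 1))) / d"
    using face[of "-1"] face[of 1] unfolding eth_val_def Let_def d_def span_def by simp
  have au: "au g C u i i q = 1/2" unfolding au_def by simp
  show ?thesis unfolding E M au fm using d by (simp add: field_simps)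
qed

lemma sum_shift:
  assumes fin: "finite Q" and into: "\<And>p. p \<in> A \<Longrightarrow> sh p \<in> Q" and inv1: "\<And>p. sh' (sh p) = p"
    and inv2: "\<And>q. sh (sh' q) = q" and z: "\<And>p. p \<notin> A \<Longrightarrow> h p = (0::real)"
  shows "(\<Sum>p\<in>A. h p) = (\<Sum>q\<in>Q. h (sh' q))"
proof -
  have inj: "inj_on sh A" by (metis inj_onI inv1)
  have "(\<Sum>p\<in>A. h p) = (\<Sum>p\<in>A. h (sh' (sh p)))" by (simp add: inv1)
  also have "\<dots> = (\<Sum>q\<in>sh ` A. h (sh' q))" using sum.reindex[OF inj, of "\<lambda>q. h (sh' q)"] by simp
  also have "\<dots> = (\<Sum>q\<in>Q. h (sh' q))"
  proof (rule sum.mono_neutral_left[OF fin])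
    show "sh ` A \<subseteq> Q" using into by blast
    show "\<forall>q\<in>Q - sh ` A. h (sh' q) = 0"
    proof
      fix q assume "q \<in> Q - sh ` A"
      then have "sh' q \<notin> A" by (metis DiffD2 image_eqI inv2)
      then show "h (sh' q) = 0" by (rule z)
    qed
  qed
  finally show ?thesis .
qed

lemma if_in_Q:
  assumes f: "int_face C i p" and t: "t = -1 \<or> t = 1"
  shows "p(j := p j + t) \<in> ij_cells C i j"
proof -
  have f1: "even (p i)" "\<And>k. k \<noteq> i \<Longrightarrow> odd (p k)" "is_cell C (p(i := p i - 1))" "is_cell C (p(i := p i + 1))"
    using f unfolding int_face_def by auto
  define K where "K = (if i = j then p(i := p i + t) else p(i := p i - 1))"
  have cK: "is_cell C K" using f1(3,4) t unfolding K_def by auto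
  define m where "m = (\<lambda>k. (K k - 1) div 2)"
  have mC: "m \<in> C" using cK unfolding is_cell_def m_def by simp
  have oK: "odd (K k)" for k using cK unfolding is_cell_def by simp
  have m2: "2 * m k = K k - 1" for k using oK[of k] unfolding m_def by presburger
  have near: "2 * m k \<le> (p(j := p j + t)) k \<and> (p(j := p j + t)) k \<le> 2 * m k + 2" for k
    unfolding m2 using t f1 by (cases "i = j"; cases "k = i"; cases "k = j") (auto simp: K_def)
  have pos: "ij_pos i j (p(j := p j + t))"
    unfolding ij_pos_def
  proof
    fix k
    have oj: "odd (p j)" if "i \<noteq> j" using f1(2) that by metis
    show "even ((p(j := p j + t)) k) = (i \<noteq> j \<and> (k = i \<or> k = j))"
    proof (cases "k = j")
      case True
      then show ?thesis using t f1(1) oj by (cases "i = j") auto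
    next
      case False
      then show ?thesis using f1(1) f1(2)[of k] by (cases "k = i") auto
    qed
  qed
  show ?thesis unfolding ij_cells_def near_mesh_def using pos mC near by blast
qed

lemma per_j:
  fixes g :: "'n::finite \<Rightarrow> int \<Rightarrow> real" and C :: "('n \<Rightarrow> int) set"
  assumes sm: "\<forall>k. strict_mono (g k)" and finC: "finite C" and uH: "u \<in> H_E0 C"
    and wz: "\<And>p. \<not> int_face C i p \<Longrightarrow> W p = 0"
  shows "(\<Sum>p\<in>{p. int_face C i p}. W p * (\<Sum>s\<in>{-1, 1}. mflux g u i p j s * vstar upw g u i V p j s))
    = - (LINT x:Omega g C|lborel. recon g C i j (av upw g u i j) V x * recon g C j i (au g C u i j) (u j) x * eth g C i j W x)"
proof -
  define Q where "Q = ij_cells C i j"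
  have finQ: "finite Q" unfolding Q_def by (rule ij_cells_finite[OF finC])
  define Rv where "Rv q = av upw g u i j q * V (q(j := q j - 1)) + (1 - av upw g u i j q) * V (q(j := q j + 1))" for q
  define Ru where "Ru q = au g C u i j q * u j (q(i := q i - 1)) + (1 - au g C u i j q) * u j (q(i := q i + 1))" for q
  define E where "E q = eth_val g C i j W q" for q
  define F where "F q = (face_meas g j (q(i := q i - 1)) * u j (q(i := q i - 1)) + face_meas g j (q(i := q i + 1)) * u j (q(i := q i + 1))) / 2" for q
  have int: "(LINT x:Omega g C|lborel. recon g C i j (av upw g u i j) V x * recon g C j i (au g C u i j) (u j) x * eth g C i j W x)
      = (\<Sum>q\<in>Q. Rv q * Ru q * E q * measure lborel (Omega g C \<inter> cbox (lov g q) (hiv g q)))"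
    unfolding recon_def eth_def ij_cells_sym[of C j i] dbox_cbox Rv_def Ru_def E_def Q_def
    by (rule int3[OF finQ[unfolded Q_def] Omega_sets ij_box_disj[OF sm]])
  have key: "Ru q * E q * MM g C q = F q * (W (q(j := q j + 1)) - W (q(j := q j - 1)))" if "q \<in> Q" for q
  proof (cases "i = j")
    case True
    then show ?thesis using key_eq[OF sm, of q C i u W] that unfolding Q_def Ru_def E_def F_def by simp
  next
    case False
    then show ?thesis using key_ne[OF sm False uH, of q W] unfolding Ru_def E_def F_def by simp
  qed
  have A1: "(\<Sum>p\<in>{p. int_face C i p}. W p * (mflux g u i p j 1 * vstar upw g u i V p j 1))
      = (\<Sum>q\<in>Q. W (q(j := q j - 1)) * (mflux g u i (q(j := q j - 1)) j 1 * vstar upw g u i V (q(j := q j - 1)) j 1))"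
  proof (rule sum_shift[OF finQ, where sh = "\<lambda>p. p(j := p j + 1)"])
    show "p(j := p j + 1) \<in> Q" if "p \<in> {p. int_face C i p}" for p
      using if_in_Q[of C i p 1 j] that unfolding Q_def by simp
  qed (auto simp: wz)
  have A2: "(\<Sum>p\<in>{p. int_face C i p}. W p * (mflux g u i p j (-1) * vstar upw g u i V p j (-1)))
      = (\<Sum>q\<in>Q. W (q(j := q j + 1)) * (mflux g u i (q(j := q j + 1)) j (-1) * vstar upw g u i V (q(j := q j + 1)) j (-1)))"
  proof (rule sum_shift[OF finQ, where sh = "\<lambda>p. p(j := p j - 1)"])
    show "p(j := p j - 1) \<in> Q" if "p \<in> {p. int_face C i p}" for p
      using if_in_Q[of C i p "-1" j] that unfolding Q_def by simp
  qed (auto simp: wz)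
  have "(\<Sum>p\<in>{p. int_face C i p}. W p * (\<Sum>s\<in>{-1, 1}. mflux g u i p j s * vstar upw g u i V p j s))
     = (\<Sum>p\<in>{p. int_face C i p}. W p * (mflux g u i p j 1 * vstar upw g u i V p j 1))
       + (\<Sum>p\<in>{p. int_face C i p}. W p * (mflux g u i p j (-1) * vstar upw g u i V p j (-1)))"
    by (simp add: sum.distrib distrib_left)
  also have "\<dots> = (\<Sum>q\<in>Q. W (q(j := q j - 1)) * (mflux g u i (q(j := q j - 1)) j 1 * vstar upw g u i V (q(j := q j - 1)) j 1)
       + W (q(j := q j + 1)) * (mflux g u i (q(j := q j + 1)) j (-1) * vstar upw g u i V (q(j := q j + 1)) j (-1)))"
    unfolding A1 A2 by (simp add: sum.distrib)
  also have "\<dots> = (\<Sum>q\<in>Q. F q * Rv q * (W (q(j := q j - 1)) - W (q(j := q j + 1))))"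
  proof (rule sum.cong[OF refl])
    fix q assume "q \<in> Q"
    show "W (q(j := q j - 1)) * (mflux g u i (q(j := q j - 1)) j 1 * vstar upw g u i V (q(j := q j - 1)) j 1)
       + W (q(j := q j + 1)) * (mflux g u i (q(j := q j + 1)) j (-1) * vstar upw g u i V (q(j := q j + 1)) j (-1))
       = F q * Rv q * (W (q(j := q j - 1)) - W (q(j := q j + 1)))"
      unfolding F_def Rv_def by (rule lhs_q[OF sm, where w = W and v = V and u = u and i = i and j = j and q = q and upw = upw])
  qed
  also have "\<dots> = (\<Sum>q\<in>Q. - (Rv q * Ru q * E q * MM g C q))"
  proof (rule sum.cong[OF refl])
    fix q assume "q \<in> Q"
    have "Rv q * Ru q * E q * MM g C q = Rv q * (Ru q * E q * MM g C q)" by (simp only: mult.assoc)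
    also have "\<dots> = Rv q * (F q * (W (q(j := q j + 1)) - W (q(j := q j - 1))))" by (simp only: key[OF \<open>q \<in> Q\<close>])
    finally show "F q * Rv q * (W (q(j := q j - 1)) - W (q(j := q j + 1))) = - (Rv q * Ru q * E q * MM g C q)"
      by (simp add: algebra_simps)
  qed
  also have "\<dots> = - (\<Sum>q\<in>Q. Rv q * Ru q * E q * measure lborel (Omega g C \<inter> cbox (lov g q) (hiv g q)))"
    by (simp add: sum_negf MM_def dbox_cbox)
  finally show ?thesis unfolding int .
qed

theorem lemma3p2:
  fixes g :: "'n::finite \<Rightarrow> int \<Rightarrow> real" and C :: "('n \<Rightarrow> int) set"
    and upw :: bool and i :: 'n and u :: "'n \<Rightarrow> ('n \<Rightarrow> int) \<Rightarrow> real"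
  assumes "CARD('n) = 2 \<or> CARD('n) = 3"
    and "MAC_grid g C"
    and "u \<in> H_E0 C"
  shows "\<exists>\<alpha>v \<alpha>u :: 'n \<Rightarrow> ('n \<Rightarrow> int) \<Rightarrow> real.
     (\<forall>j q. 0 \<le> \<alpha>v j q \<and> \<alpha>v j q \<le> 1) \<and> (\<forall>j q. 0 \<le> \<alpha>u j q \<and> \<alpha>u j q \<le> 1) \<and>
     (\<forall>v w. v \<in> H_E0 C \<longrightarrow> w \<in> H_E0 C \<longrightarrow>
        b_E upw g C i u (v i) (w i) =
          - (\<Sum>j\<in>UNIV. LINT x:Omega g C|lborel.
               recon g C i j (\<alpha>v j) (v i) x * recon g C j i (\<alpha>u j) (u j) x * eth g C i j (w i) x))"
proof -
  from assms(2) have finC: "finite C" and sm: "\<forall>k. strict_mono (g k)" by (auto simp: MAC_grid_def)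
  have r1: "\<forall>j q. 0 \<le> av upw g u i j q \<and> av upw g u i j q \<le> 1" using av_range by blast
  have r2: "\<forall>j q. 0 \<le> au g C u i j q \<and> au g C u i j q \<le> 1"
  proof (intro allI)
    fix j q show "0 \<le> au g C u i j q \<and> au g C u i j q \<le> 1"
    proof (cases "j = i")
      case True then show ?thesis by (simp add: au_def)
    next
      case False then show ?thesis using au_ne[OF sm _ assms(3), of i j q] by auto
    qed
  qed
  have r3: "\<forall>v w. v \<in> H_E0 C \<longrightarrow> w \<in> H_E0 C \<longrightarrow>
        b_E upw g C i u (v i) (w i) =
          - (\<Sum>j\<in>UNIV. LINT x:Omega g C|lborel.
               recon g C i j (av upw g u i j) (v i) x * recon g C j i (au g C u i j) (u j) x * eth g C i j (w i) x)"
  proof (intro allI impI)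
    fix v w assume vH: "v \<in> H_E0 C" and wH: "w \<in> H_E0 C"
    have wz: "\<And>p. \<not> int_face C i p \<Longrightarrow> w i p = 0" using wH unfolding H_E0_def by auto
    have "b_E upw g C i u (v i) (w i) = (\<Sum>j\<in>UNIV. \<Sum>p\<in>{p. int_face C i p}.
        w i p * (\<Sum>s\<in>{-1, 1}. mflux g u i p j s * vstar upw g u i (v i) p j s))"
      unfolding b_E_def by (simp add: sum_distrib_left sum.swap[of _ "{p. int_face C i p}"])
    also have "\<dots> = (\<Sum>j\<in>UNIV. - (LINT x:Omega g C|lborel.
               recon g C i j (av upw g u i j) (v i) x * recon g C j i (au g C u i j) (u j) x * eth g C i j (w i) x))"
      by (rule sum.cong[OF refl], rule per_j[OF sm finC assms(3) wz])
    finally show "b_E upw g C i u (v i) (w i) =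
          - (\<Sum>j\<in>UNIV. LINT x:Omega g C|lborel.
               recon g C i j (av upw g u i j) (v i) x * recon g C j i (au g C u i j) (u j) x * eth g C i j (w i) x)"
      by (simp add: sum_negf)
  qed
  show ?thesis
    by (intro exI[of _ "av upw g u i"] exI[of _ "au g C u i"]) (use r1 r2 r3 in blast)
qed

end
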